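(* Let $(X,d)$ be a metric space and let $u,u_1,u_2,\ldots\in F_{USC}(X)$. Then: (i) If there is a dense subset $P$ of $(0,1)$ such that $[u_n]_\alpha$ Kuratowski converges to $[u]_\alpha$ for every $\alpha\in P$, then $u_n\stackrel{\Gamma}{\longrightarrow}u$. (ii) If $u_n\stackrel{\Gamma}{\longrightarrow}u$, then $[u_n]_\alpha$ Kuratowski converges to $[u]_\alpha$ for all $\alpha\in(0,1)\setminus P(u)$.
   Context: A fuzzy set on $X$ is a function $u:X\to[0,1]$, with $\alpha$-cuts $[u]_\alpha=\{x: u(x)\ge\alpha\}$ for $\alpha\in(0,1]$ and $[u]_0=\overline{\{u>0\}}$. $F_{USC}(X)$ is the set of fuzzy sets with all $\alpha$-cuts ($\alpha\in[0,1]$) non-empty and closed. For sets $C_n\subseteq X$: $\liminf_n C_n=\{x: x=\lim_n x_n, x_n\in C_n\}$, $\limsup_n C_n=\{x: x=\lim_j x_{n_j}, x_{n_j}\in C_{n_j}\}$; $C_n$ Kuratowski converges to $C$ if $C=\liminf_n C_n=\limsup_n C_n$. ${\rm end}\,u=\{(x,t)\in X\times[0,1]: u(x)\ge t\}$, with $X\times[0,1]$ metrized by $\overline{d}((x,\alpha),(y,\beta))=d(x,y)+|\alpha-\beta|$. $u_n\stackrel{\Gamma}{\longrightarrow}u$ means ${\rm end}\,u_n$ Kuratowski converges to ${\rm end}\,u$. A number $\alpha\in(0,1)$ is a platform point of $u$ if $\overline{\{u>\alpha\}}\subsetneqq[u]_\alpha$; $P(u)$ denotes the set of platform points of $u$.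 *)

theory Defs
  imports "HOL-Analysis.Analysis"
begin

definition fuzzy :: "('a \<Rightarrow> real) \<Rightarrow> bool" where
  "fuzzy u \<longleftrightarrow> (\<forall>x. 0 \<le> u x \<and> u x \<le> 1)"

definition cut :: "('a::topological_space \<Rightarrow> real) \<Rightarrow> real \<Rightarrow> 'a set" where
  "cut u \<alpha> = (if \<alpha> = 0 then closure {x. u x > 0} else {x. u x \<ge> \<alpha>})"

definition FUSC :: "('a::topological_space \<Rightarrow> real) \<Rightarrow> bool" where
  "FUSC u \<longleftrightarrow> fuzzy u \<and> (\<forall>\<alpha>\<in>{0..1}. cut u \<alpha> \<noteq> {} \<and> closed (cut u \<alpha>))"

definition kliminf :: "(nat \<Rightarrow> 'b::topological_space set) \<Rightarrow> 'b set" where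
  "kliminf C = {x. \<exists>xs. (\<forall>n. xs n \<in> C n) \<and> xs \<longlonglongrightarrow> x}"

definition klimsup :: "(nat \<Rightarrow> 'b::topological_space set) \<Rightarrow> 'b set" where
  "klimsup C = {x. \<exists>r xs. strict_mono r \<and> (\<forall>j. xs j \<in> C (r j)) \<and> xs \<longlonglongrightarrow> x}"

definition kconv :: "(nat \<Rightarrow> 'b::topological_space set) \<Rightarrow> 'b set \<Rightarrow> bool" where
  "kconv C A \<longleftrightarrow> A = kliminf C \<and> A = klimsup C"

definition endo :: "('a \<Rightarrow> real) \<Rightarrow> ('a \<times> real) set" where
  "endo u = {(x, t). t \<in> {0..1} \<and> u x \<ge> t}"

definition gamma_conv :: "(nat \<Rightarrow> 'a::metric_space \<Rightarrow> real) \<Rightarrow> ('a \<Rightarrow> real) \<Rightarrow> bool" where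
  "gamma_conv us u \<longleftrightarrow> kconv (\<lambda>n. endo (us n)) (endo u)"

definition platform_points :: "('a::topological_space \<Rightarrow> real) \<Rightarrow> real set" where
  "platform_points u = {\<alpha>. 0 < \<alpha> \<and> \<alpha> < 1 \<and> closure {x. u x > \<alpha>} \<subset> cut u \<alpha>}"

end

theory Submission
  imports Defs
begin

lemma kliminf_intro:
  fixes C :: "nat \<Rightarrow> 'b::metric_space set"
  assumes ne: "\<And>n. C n \<noteq> {}"
    and ev: "\<And>e. e > 0 \<Longrightarrow> eventually (\<lambda>n. \<exists>y\<in>C n. dist y x < e) sequentially"
  shows "x \<in> kliminf C"
proof -
  have lim: "(\<lambda>n. infdist x (C n)) \<longlonglongrightarrow> 0"
  proof (rule tendstoI)
    fix e :: real assume "e > 0"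
    from ev[OF this] show "eventually (\<lambda>n. dist (infdist x (C n)) 0 < e) sequentially"
    proof (rule eventually_mono)
      fix n assume "\<exists>y\<in>C n. dist y x < e"
      then obtain y where "y \<in> C n" "dist y x < e" by blast
      then have "infdist x (C n) < e" using infdist_le[of y "C n" x] by (simp add: dist_commute)
      then show "dist (infdist x (C n)) 0 < e" using infdist_nonneg[of x "C n"] by simp
    qed
  qed
  have "\<forall>n. \<exists>y. y \<in> C n \<and> dist x y < infdist x (C n) + 1 / (Suc n)"
  proof
    fix n
    have "infdist x (C n) < infdist x (C n) + 1 / Suc n" by simp
    then have "(INF a\<in>C n. dist x a) < infdist x (C n) + 1 / Suc n"
      using infdist_notempty[OF ne[of n]] by simp
    then obtain a where "a \<in> C n" "dist x a < infdist x (C n) + 1 / Suc n"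
      using cINF_less_iff[of "C n" "\<lambda>a. dist x a"] ne[of n] bdd_below_image_dist[of x "C n"] by blast
    then show "\<exists>y. y \<in> C n \<and> dist x y < infdist x (C n) + 1 / (Suc n)" by blast
  qed
  then obtain xs where xs: "\<And>n. xs n \<in> C n" "\<And>n. dist x (xs n) < infdist x (C n) + 1 / (Suc n)"
    by metis
  have lim2: "(\<lambda>n. infdist x (C n) + 1 / real (Suc n)) \<longlonglongrightarrow> 0"
    using tendsto_add[OF lim LIMSEQ_Suc[OF lim_1_over_n]] by simp
  have "(\<lambda>n. dist (xs n) x) \<longlonglongrightarrow> 0"
  proof (rule Lim_null_comparison[OF always_eventually lim2], rule allI)
    fix n show "norm (dist (xs n) x) \<le> infdist x (C n) + 1 / real (Suc n)"
      using xs(2)[of n] by (simp add: dist_commute)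
  qed
  then have "xs \<longlonglongrightarrow> x" using tendsto_dist_iff by blast
  then show ?thesis unfolding kliminf_def using xs(1) by blast
qed

lemma dist_pair_le: "dist (a, b) (c, d) \<le> dist a c + dist b d"
  unfolding dist_Pair_Pair by (rule sqrt_sum_squares_le_sum) auto

lemma kliminf_sub_klimsup: "kliminf C \<subseteq> klimsup C"
proof
  fix x assume "x \<in> kliminf C"
  then obtain xs where "\<forall>n. xs n \<in> C n" "xs \<longlonglongrightarrow> x" unfolding kliminf_def by blast
  then show "x \<in> klimsup C" unfolding klimsup_def
    by (intro CollectI exI[of _ id] exI[of _ xs]) (auto simp: strict_mono_def)
qed

lemma FUSC_bounds: "FUSC u \<Longrightarrow> 0 \<le> u x \<and> u x \<le> 1"
  unfolding FUSC_def fuzzy_def by blast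

lemma cut_pos: "\<alpha> > 0 \<Longrightarrow> cut u \<alpha> = {x. u x \<ge> \<alpha>}"
  unfolding cut_def by simp

lemma endo_mem: "(x, t) \<in> endo u \<longleftrightarrow> 0 \<le> t \<and> t \<le> 1 \<and> t \<le> u x"
  unfolding endo_def by auto

lemma part1_limsup:
  fixes u :: "'a::metric_space \<Rightarrow> real" and us :: "nat \<Rightarrow> 'a \<Rightarrow> real"
  assumes u: "FUSC u"
    and Pd: "\<forall>a b. 0 \<le> a \<and> a < b \<and> b \<le> 1 \<longrightarrow> (\<exists>p\<in>P. a < p \<and> p < b)"
    and P01: "P \<subseteq> {0<..<1}"
    and K: "\<forall>\<alpha>\<in>P. kconv (\<lambda>n. cut (us n) \<alpha>) (cut u \<alpha>)"
  shows "klimsup (\<lambda>n. endo (us n)) \<subseteq> endo u"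
proof
  fix z assume "z \<in> klimsup (\<lambda>n. endo (us n))"
  then obtain r xs where r: "strict_mono r" and xs: "\<And>j. xs j \<in> endo (us (r j))" and lim: "xs \<longlonglongrightarrow> z"
    unfolding klimsup_def by blast
  obtain x t where z: "z = (x, t)" by (cases z)
  have limx: "(\<lambda>j. fst (xs j)) \<longlonglongrightarrow> x" using tendsto_fst[OF lim] z by simp
  have limt: "(\<lambda>j. snd (xs j)) \<longlonglongrightarrow> t" using tendsto_snd[OF lim] z by simp
  have xsb: "0 \<le> snd (xs j) \<and> snd (xs j) \<le> 1 \<and> snd (xs j) \<le> us (r j) (fst (xs j))" for j
    using xs[of j] by (cases "xs j") (simp add: endo_mem)
  have t0: "0 \<le> t" by (rule tendsto_lowerbound[OF limt]) (use xsb in auto)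
  have t1: "t \<le> 1" by (rule tendsto_upperbound[OF limt]) (use xsb in auto)
  have "t \<le> u x"
  proof (rule ccontr)
    assume "\<not> t \<le> u x"
    then obtain p where p: "p \<in> P" "u x < p" "p < t"
      using Pd FUSC_bounds[OF u, of x] t1 by force
    have p0: "p > 0" using p(1) P01 by auto
    have "eventually (\<lambda>j. snd (xs j) > p) sequentially"
      using order_tendstoD(1)[OF limt p(3)] .
    then obtain J where J: "\<And>j. j \<ge> J \<Longrightarrow> snd (xs j) > p"
      unfolding eventually_sequentially by blast
    have "x \<in> klimsup (\<lambda>n. cut (us n) p)"
      unfolding klimsup_def
    proof (intro CollectI exI conjI allI)
      show "strict_mono (\<lambda>j. r (j + J))" using r by (simp add: strict_mono_def)
      fix j show "fst (xs (j + J)) \<in> cut (us (r (j + J))) p"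
        using J[of "j + J"] xsb[of "j + J"] p0 by (simp add: cut_pos)
    next
      show "(\<lambda>j. fst (xs (j + J))) \<longlonglongrightarrow> x" using LIMSEQ_ignore_initial_segment[OF limx] .
    qed
    then have "x \<in> cut u p" using K p(1) unfolding kconv_def by auto
    then show False using p p0 by (simp add: cut_pos)
  qed
  then show "z \<in> endo u" using z t0 t1 by (simp add: endo_mem)
qed

lemma part1_liminf:
  fixes u :: "'a::metric_space \<Rightarrow> real" and us :: "nat \<Rightarrow> 'a \<Rightarrow> real"
  assumes u: "FUSC u" and usF: "\<And>n. FUSC (us n)"
    and Pd: "\<forall>a b. 0 \<le> a \<and> a < b \<and> b \<le> 1 \<longrightarrow> (\<exists>p\<in>P. a < p \<and> p < b)"
    and P01: "P \<subseteq> {0<..<1}"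
    and K: "\<forall>\<alpha>\<in>P. kconv (\<lambda>n. cut (us n) \<alpha>) (cut u \<alpha>)"
  shows "endo u \<subseteq> kliminf (\<lambda>n. endo (us n))"
proof
  fix z assume "z \<in> endo u"
  then obtain x t where z: "z = (x, t)" and t: "0 \<le> t" "t \<le> 1" "t \<le> u x"
    by (cases z) (auto simp: endo_mem)
  show "z \<in> kliminf (\<lambda>n. endo (us n))"
  proof (cases "t = 0")
    case True
    have "\<forall>n. (x, 0) \<in> endo (us n)" using FUSC_bounds[OF usF] by (simp add: endo_mem)
    then show ?thesis unfolding kliminf_def z True by (intro CollectI exI[of _ "\<lambda>n. (x, 0)"]) auto
  next
    case False
    then have tp: "t > 0" using t by simp
    show ?thesis unfolding z
    proof (rule kliminf_intro)
      fix n have "(x, 0) \<in> endo (us n)" using FUSC_bounds[OF usF, of n x]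
        by (simp add: endo_mem)
      then show "endo (us n) \<noteq> {}" by blast
    next
      fix e :: real assume e: "e > 0"
      obtain p where p: "p \<in> P" "max 0 (t - e/2) < p" "p < t"
      proof -
        have "0 \<le> max 0 (t - e/2) \<and> max 0 (t - e/2) < t \<and> t \<le> 1" using tp t e by auto
        then show ?thesis using Pd that by blast
      qed
      have p0: "p > 0" using p by simp
      have "x \<in> cut u p" using p t p0 by (simp add: cut_pos)
      then have "x \<in> kliminf (\<lambda>n. cut (us n) p)" using K p(1) unfolding kconv_def by auto
      then obtain ys where ys: "\<And>n. ys n \<in> cut (us n) p" and lim: "ys \<longlonglongrightarrow> x"
        unfolding kliminf_def by blast
      have "eventually (\<lambda>n. dist (ys n) x < e/2) sequentially"
        using tendstoD[OF lim, of "e/2"] e by simp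
      then show "eventually (\<lambda>n. \<exists>y\<in>endo (us n). dist y (x, t) < e) sequentially"
      proof (rule eventually_mono)
        fix n assume d: "dist (ys n) x < e/2"
        have "(ys n, p) \<in> endo (us n)" using ys[of n] p0 p t by (simp add: cut_pos endo_mem)
        moreover have "dist (ys n, p) (x, t) < e"
        proof -
          have "dist p t < e/2" using p unfolding dist_real_def by auto
          then show ?thesis using dist_pair_le[of "ys n" p x t] d by linarith
        qed
        ultimately show "\<exists>y\<in>endo (us n). dist y (x, t) < e" by blast
      qed
    qed
  qed
qed

lemma part2_limsup:
  fixes u :: "'a::metric_space \<Rightarrow> real" and us :: "nat \<Rightarrow> 'a \<Rightarrow> real"
  assumes g: "gamma_conv us u" and a: "0 < \<alpha>" "\<alpha> < 1"
  shows "klimsup (\<lambda>n. cut (us n) \<alpha>) \<subseteq> cut u \<alpha>"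
proof
  fix x assume "x \<in> klimsup (\<lambda>n. cut (us n) \<alpha>)"
  then obtain r xs where r: "strict_mono r" and xs: "\<And>j. xs j \<in> cut (us (r j)) \<alpha>" and lim: "xs \<longlonglongrightarrow> x"
    unfolding klimsup_def by blast
  have "(x, \<alpha>) \<in> klimsup (\<lambda>n. endo (us n))"
    unfolding klimsup_def
  proof (intro CollectI exI conjI allI)
    show "strict_mono r" by fact
    fix j show "(xs j, \<alpha>) \<in> endo (us (r j))" using xs[of j] a by (simp add: cut_pos endo_mem)
  next
    show "(\<lambda>j. (xs j, \<alpha>)) \<longlonglongrightarrow> (x, \<alpha>)" by (intro tendsto_Pair lim tendsto_const)
  qed
  then have "(x, \<alpha>) \<in> endo u" using g unfolding gamma_conv_def kconv_def by auto
  then show "x \<in> cut u \<alpha>" using a by (simp add: cut_pos endo_mem)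
qed

lemma part2_liminf:
  fixes u :: "'a::metric_space \<Rightarrow> real" and us :: "nat \<Rightarrow> 'a \<Rightarrow> real"
  assumes u: "FUSC u" and usF: "\<And>n. FUSC (us n)"
    and g: "gamma_conv us u" and a: "0 < \<alpha>" "\<alpha> < 1" and np: "\<alpha> \<notin> platform_points u"
  shows "cut u \<alpha> \<subseteq> kliminf (\<lambda>n. cut (us n) \<alpha>)"
proof
  fix x assume x: "x \<in> cut u \<alpha>"
  have cl: "closed (cut u \<alpha>)" using u a unfolding FUSC_def by auto
  have "{y. u y > \<alpha>} \<subseteq> cut u \<alpha>" using a by (auto simp: cut_pos)
  then have "closure {y. u y > \<alpha>} \<subseteq> cut u \<alpha>" using cl by (rule closure_minimal)
  then have eq: "closure {y. u y > \<alpha>} = cut u \<alpha>" using np a unfolding platform_points_def by auto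
  have EI: "endo u \<subseteq> kliminf (\<lambda>n. endo (us n))" using g unfolding gamma_conv_def kconv_def by auto
  show "x \<in> kliminf (\<lambda>n. cut (us n) \<alpha>)"
  proof (rule kliminf_intro)
    fix n show "cut (us n) \<alpha> \<noteq> {}" using usF[of n] a unfolding FUSC_def by auto
  next
    fix e :: real assume e: "e > 0"
    have "x \<in> closure {y. u y > \<alpha>}" using x eq by simp
    then obtain y where y: "u y > \<alpha>" "dist y x < e/2" using e
      unfolding closure_approachable by (metis half_gt_zero mem_Collect_eq)
    have "(y, u y) \<in> endo u" using FUSC_bounds[OF u, of y] by (simp add: endo_mem)
    then have "(y, u y) \<in> kliminf (\<lambda>n. endo (us n))" using EI by blast
    then obtain zs where zs: "\<And>n. zs n \<in> endo (us n)" and lim: "zs \<longlonglongrightarrow> (y, u y)"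
      unfolding kliminf_def by blast
    have l1: "(\<lambda>n. fst (zs n)) \<longlonglongrightarrow> y" using tendsto_fst[OF lim] by simp
    have l2: "(\<lambda>n. snd (zs n)) \<longlonglongrightarrow> u y" using tendsto_snd[OF lim] by simp
    have ev1: "eventually (\<lambda>n. dist (fst (zs n)) y < e/2) sequentially"
      using tendstoD[OF l1, of "e/2"] e by simp
    have ev2: "eventually (\<lambda>n. snd (zs n) > \<alpha>) sequentially"
      using order_tendstoD(1)[OF l2 y(1)] .
    show "eventually (\<lambda>n. \<exists>z\<in>cut (us n) \<alpha>. dist z x < e) sequentially"
      using ev1 ev2
    proof eventually_elim
      case (elim n)
      have "snd (zs n) \<le> us n (fst (zs n))" using zs[of n] by (cases "zs n") (simp add: endo_mem)
      then have "fst (zs n) \<in> cut (us n) \<alpha>" using elim a by (simp add: cut_pos)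
      moreover have "dist (fst (zs n)) x < e" using elim y(2) dist_triangle[of "fst (zs n)" x y] by linarith
      ultimately show ?case by blast
    qed
  qed
qed

theorem theorem3p6:
  fixes u :: "'a::metric_space \<Rightarrow> real" and us :: "nat \<Rightarrow> 'a \<Rightarrow> real"
  assumes "FUSC u" and "\<And>n. FUSC (us n)"
  shows "(\<forall>P. P \<subseteq> {0<..<1} \<and> (\<forall>a b. 0 \<le> a \<and> a < b \<and> b \<le> 1 \<longrightarrow> (\<exists>p\<in>P. a < p \<and> p < b))
              \<and> (\<forall>\<alpha>\<in>P. kconv (\<lambda>n. cut (us n) \<alpha>) (cut u \<alpha>))
           \<longrightarrow> gamma_conv us u)
       \<and> (gamma_conv us u \<longrightarrow>
           (\<forall>\<alpha>\<in>{0<..<1} - platform_points u. kconv (\<lambda>n. cut (us n) \<alpha>) (cut u \<alpha>)))"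
proof (intro conjI allI impI ballI)
  fix P :: "real set"
  assume H: "P \<subseteq> {0<..<1} \<and> (\<forall>a b. 0 \<le> a \<and> a < b \<and> b \<le> 1 \<longrightarrow> (\<exists>p\<in>P. a < p \<and> p < b))
              \<and> (\<forall>\<alpha>\<in>P. kconv (\<lambda>n. cut (us n) \<alpha>) (cut u \<alpha>))"
  have A: "klimsup (\<lambda>n. endo (us n)) \<subseteq> endo u"
    using part1_limsup[OF assms(1), of P us] H by blast
  have B: "endo u \<subseteq> kliminf (\<lambda>n. endo (us n))"
    using part1_liminf[OF assms(1), of us P] assms(2) H by blast
  show "gamma_conv us u" unfolding gamma_conv_def kconv_def
    using A B kliminf_sub_klimsup[of "\<lambda>n. endo (us n)"] by blast
next
  fix \<alpha> assume g: "gamma_conv us u" and a: "\<alpha> \<in> {0<..<1} - platform_points u"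
  have A: "klimsup (\<lambda>n. cut (us n) \<alpha>) \<subseteq> cut u \<alpha>" using part2_limsup[OF g] a by auto
  have B: "cut u \<alpha> \<subseteq> kliminf (\<lambda>n. cut (us n) \<alpha>)" using part2_liminf[OF assms g] a by auto
  show "kconv (\<lambda>n. cut (us n) \<alpha>) (cut u \<alpha>)" unfolding kconv_def
    using A B kliminf_sub_klimsup[of "\<lambda>n. cut (us n) \<alpha>"] by blast
qed

end
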